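(* Let $A_S$ be an Artin group associated to a Coxeter matrix over a finite set $S$. Then $A_S$ is parabolic-retractable if and only if, for every $X\subseteq S$ and every $x\in X$, the subgroup $A_X$ admits a retraction onto $A_{X\setminus\{x\}}$.
   Context: A Coxeter matrix over a finite set $S$ is a matrix $M=(m_{s,t})_{s,t\in S}$ with entries in $\mathbb{N}\cup\{\infty\}$, $m_{s,s}=1$, and $m_{s,t}=m_{t,s}\ge 2$ for $s\neq t$. Write $\Pi(s,t,m)$ for the alternating word $sts\cdots$ of length $m$. The Artin group is $A_S=\langle S\mid \Pi(s,t,m_{s,t})=\Pi(t,s,m_{s,t})$ for $s\neq t$, $m_{s,t}\neq\infty\rangle$. For $X\subseteq S$, $A_X$ is the subgroup generated by $X$ ($A_\emptyset$ is trivial). A retraction of $G$ onto a subgroup $H$ is a homomorphism $\varphi:G\to H$ with $\varphi|_H=\mathrm{id}_H$. $A_S$ is parabolic-retractable if it admits a retraction onto $A_X$ for every $X\subseteq S$. *)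

theory Defs
  imports "HOL-Algebra.Generated_Groups" "HOL-Library.Extended_Nat"
begin

definition coxeter_matrix :: "('a \<Rightarrow> 'a \<Rightarrow> enat) \<Rightarrow> 'a set \<Rightarrow> bool" where
  "coxeter_matrix M S \<longleftrightarrow>
     (\<forall>s\<in>S. M s s = 1) \<and>
     (\<forall>s\<in>S. \<forall>t\<in>S. s \<noteq> t \<longrightarrow> M s t = M t s \<and> M s t \<ge> 2)"

text \<open>Words in the letters s (True) and s inverse (False).\<close>
type_synonym 'a aword = "('a \<times> bool) list"

definition words_over :: "'a set \<Rightarrow> 'a aword set" where
  "words_over S = {w. fst ` set w \<subseteq> S}"

fun alt_word :: "'a \<Rightarrow> 'a \<Rightarrow> nat \<Rightarrow> 'a aword" where
  "alt_word s t 0 = []"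
| "alt_word s t (Suc n) = (s, True) # alt_word t s n"

inductive artin_eq :: "('a \<Rightarrow> 'a \<Rightarrow> enat) \<Rightarrow> 'a set \<Rightarrow> 'a aword \<Rightarrow> 'a aword \<Rightarrow> bool"
  for M S where
  refl: "w \<in> words_over S \<Longrightarrow> artin_eq M S w w"
| sym: "artin_eq M S u v \<Longrightarrow> artin_eq M S v u"
| trans: "artin_eq M S u v \<Longrightarrow> artin_eq M S v w \<Longrightarrow> artin_eq M S u w"
| cancel: "u \<in> words_over S \<Longrightarrow> v \<in> words_over S \<Longrightarrow> s \<in> S \<Longrightarrow>
     artin_eq M S (u @ [(s, b), (s, \<not> b)] @ v) (u @ v)"
| braid: "u \<in> words_over S \<Longrightarrow> v \<in> words_over S \<Longrightarrow> s \<in> S \<Longrightarrow> t \<in> S \<Longrightarrow> s \<noteq> t \<Longrightarrow>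
     M s t = enat m \<Longrightarrow>
     artin_eq M S (u @ alt_word s t m @ v) (u @ alt_word t s m @ v)"

definition artin_rel :: "('a \<Rightarrow> 'a \<Rightarrow> enat) \<Rightarrow> 'a set \<Rightarrow> ('a aword \<times> 'a aword) set" where
  "artin_rel M S = {(u, v). artin_eq M S u v}"

definition artin_group :: "('a \<Rightarrow> 'a \<Rightarrow> enat) \<Rightarrow> 'a set \<Rightarrow> 'a aword set monoid" where
  "artin_group M S =
     \<lparr> carrier = words_over S // artin_rel M S,
       monoid.mult = (\<lambda>A B. artin_rel M S `` {(SOME a. a \<in> A) @ (SOME b. b \<in> B)}),
       one = artin_rel M S `` {[]} \<rparr>"

definition artin_gen :: "('a \<Rightarrow> 'a \<Rightarrow> enat) \<Rightarrow> 'a set \<Rightarrow> 'a \<Rightarrow> 'a aword set" where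
  "artin_gen M S s = artin_rel M S `` {[(s, True)]}"

definition artin_parabolic :: "('a \<Rightarrow> 'a \<Rightarrow> enat) \<Rightarrow> 'a set \<Rightarrow> 'a set \<Rightarrow> 'a aword set set" where
  "artin_parabolic M S X = generate (artin_group M S) (artin_gen M S ` X)"

definition retraction :: "('a, 'b) monoid_scheme \<Rightarrow> 'a set \<Rightarrow> ('a \<Rightarrow> 'a) \<Rightarrow> bool" where
  "retraction G H \<phi> \<longleftrightarrow> \<phi> \<in> hom G (G\<lparr>carrier := H\<rparr>) \<and> (\<forall>h\<in>H. \<phi> h = h)"

definition parabolic_retractable :: "('a \<Rightarrow> 'a \<Rightarrow> enat) \<Rightarrow> 'a set \<Rightarrow> bool" where
  "parabolic_retractable M S \<longleftrightarrow>
     (\<forall>X\<subseteq>S. \<exists>\<phi>. retraction (artin_group M S) (artin_parabolic M S X) \<phi>)"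

end

theory Submission
  imports Defs
begin

lemma words_append[simp]: "(u @ v \<in> words_over S) = (u \<in> words_over S \<and> v \<in> words_over S)"
  by (auto simp: words_over_def)

lemma words_Cons[simp]: "(x # v \<in> words_over S) = (fst x \<in> S \<and> v \<in> words_over S)"
  by (auto simp: words_over_def)

lemma words_Nil[simp]: "[] \<in> words_over S"
  by (auto simp: words_over_def)

lemma alt_word_words: "s \<in> S \<Longrightarrow> t \<in> S \<Longrightarrow> alt_word s t m \<in> words_over S"
  by (induction m arbitrary: s t) auto

lemma artin_eq_words: "artin_eq M S u v \<Longrightarrow> u \<in> words_over S \<and> v \<in> words_over S"
  by (induction rule: artin_eq.induct) (auto simp: alt_word_words)

lemma artin_equiv: "equiv (words_over S) (artin_rel M S)"
  unfolding equiv_def refl_on_def sym_def trans_def artin_rel_def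
  using artin_eq_words[of M S] by (auto intro: artin_eq.intros)

lemma cong_left: "artin_eq M S u v \<Longrightarrow> w \<in> words_over S \<Longrightarrow> artin_eq M S (w @ u) (w @ v)"
proof (induction rule: artin_eq.induct)
  case (refl u) then show ?case by (auto intro: artin_eq.intros)
next
  case (sym u v) then show ?case by (auto intro: artin_eq.intros)
next
  case (trans u v x) then show ?case by (auto intro: artin_eq.intros(3))
next
  case (cancel u v s b)
  then show ?case using artin_eq.cancel[of "w @ u" S v s M b] by simp
next
  case (braid u v s t m)
  then show ?case using artin_eq.braid[of "w @ u" S v s t M m] by simp
qed

lemma cong_right: "artin_eq M S u v \<Longrightarrow> w \<in> words_over S \<Longrightarrow> artin_eq M S (u @ w) (v @ w)"
proof (induction rule: artin_eq.induct)
  case (refl u) then show ?case by (auto intro: artin_eq.intros)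
next
  case (sym u v) then show ?case by (auto intro: artin_eq.intros)
next
  case (trans u v x) then show ?case by (auto intro: artin_eq.intros(3))
next
  case (cancel u v s b)
  then show ?case using artin_eq.cancel[of u S "v @ w" s M b] by simp
next
  case (braid u v s t m)
  then show ?case using artin_eq.braid[of u S "v @ w" s t M m] by simp
qed

lemma cong_both: "artin_eq M S a a' \<Longrightarrow> artin_eq M S b b' \<Longrightarrow> artin_eq M S (a @ b) (a' @ b')"
  by (meson artin_eq.trans artin_eq_words cong_left cong_right)

lemma class_eq: "a \<in> words_over S \<Longrightarrow> b \<in> words_over S \<Longrightarrow>
   (artin_rel M S `` {a} = artin_rel M S `` {b}) = artin_eq M S a b"
  using eq_equiv_class_iff[OF artin_equiv] by (simp add: artin_rel_def)

lemma some_class: "a \<in> words_over S \<Longrightarrow> artin_eq M S a (SOME a'. a' \<in> artin_rel M S `` {a})"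
proof -
  assume a: "a \<in> words_over S"
  have "a \<in> artin_rel M S `` {a}" using a by (simp add: artin_rel_def artin_eq.refl)
  then have "(SOME a'. a' \<in> artin_rel M S `` {a}) \<in> artin_rel M S `` {a}" by (rule someI)
  then show ?thesis by (simp add: artin_rel_def)
qed

lemma artin_mult: "a \<in> words_over S \<Longrightarrow> b \<in> words_over S \<Longrightarrow>
  artin_rel M S `` {a} \<otimes>\<^bsub>artin_group M S\<^esub> artin_rel M S `` {b} = artin_rel M S `` {a @ b}"
proof -
  assume a: "a \<in> words_over S" and b: "b \<in> words_over S"
  define c where "c = (SOME a'. a' \<in> artin_rel M S `` {a}) @ (SOME a'. a' \<in> artin_rel M S `` {b})"
  have e: "artin_eq M S (a @ b) c" unfolding c_def
    by (rule cong_both[OF some_class[OF a] some_class[OF b]])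
  have w: "c \<in> words_over S" using artin_eq_words[OF e] by blast
  have "artin_rel M S `` {c} = artin_rel M S `` {a @ b}"
    using class_eq[of c S "a @ b" M] w a b artin_eq.sym[OF e] by simp
  then show ?thesis unfolding artin_group_def c_def by simp
qed

lemma artin_carrier: "carrier (artin_group M S) = (\<lambda>w. artin_rel M S `` {w}) ` words_over S"
  by (auto simp: artin_group_def quotient_def)

definition winv :: "'a aword \<Rightarrow> 'a aword" where
  "winv w = rev (map (\<lambda>(s, b). (s, \<not> b)) w)"

lemma winv_words: "w \<in> words_over S \<Longrightarrow> winv w \<in> words_over S"
  by (auto simp: winv_def words_over_def)

lemma winv_l: "w \<in> words_over S \<Longrightarrow> artin_eq M S (winv w @ w) []"
proof (induction w)
  case Nil then show ?case by (simp add: winv_def artin_eq.refl)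
next
  case (Cons x w)
  obtain s b where x: "x = (s, b)" by force
  have ws: "winv w \<in> words_over S" using Cons winv_words by auto
  have "winv (x # w) @ x # w = winv w @ [(s, \<not> b), (s, \<not> \<not> b)] @ w"
    by (simp add: winv_def x)
  moreover have "artin_eq M S (winv w @ [(s, \<not> b), (s, \<not> \<not> b)] @ w) (winv w @ w)"
    by (rule artin_eq.cancel) (use Cons ws x in auto)
  ultimately show ?case using Cons by (metis artin_eq.trans words_Cons)
qed

lemma artin_group: "group (artin_group M S)"
proof (rule groupI)
  fix x y assume "x \<in> carrier (artin_group M S)" "y \<in> carrier (artin_group M S)"
  then obtain a b where "a \<in> words_over S" "b \<in> words_over S"
    "x = artin_rel M S `` {a}" "y = artin_rel M S `` {b}" by (auto simp: artin_carrier)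
  then show "x \<otimes>\<^bsub>artin_group M S\<^esub> y \<in> carrier (artin_group M S)"
    by (simp add: artin_mult artin_carrier)
next
  show "\<one>\<^bsub>artin_group M S\<^esub> \<in> carrier (artin_group M S)"
    by (simp add: artin_carrier) (simp add: artin_group_def)
next
  fix x y z assume "x \<in> carrier (artin_group M S)" "y \<in> carrier (artin_group M S)"
    "z \<in> carrier (artin_group M S)"
  then obtain a b c where "a \<in> words_over S" "b \<in> words_over S" "c \<in> words_over S"
    "x = artin_rel M S `` {a}" "y = artin_rel M S `` {b}" "z = artin_rel M S `` {c}"
    by (auto simp: artin_carrier)
  then show "x \<otimes>\<^bsub>artin_group M S\<^esub> y \<otimes>\<^bsub>artin_group M S\<^esub> z =
       x \<otimes>\<^bsub>artin_group M S\<^esub> (y \<otimes>\<^bsub>artin_group M S\<^esub> z)"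
    by (simp add: artin_mult)
next
  fix x assume "x \<in> carrier (artin_group M S)"
  then obtain a where a: "a \<in> words_over S" "x = artin_rel M S `` {a}"
    by (auto simp: artin_carrier)
  have one: "\<one>\<^bsub>artin_group M S\<^esub> = artin_rel M S `` {[]}" by (simp add: artin_group_def)
  show "\<one>\<^bsub>artin_group M S\<^esub> \<otimes>\<^bsub>artin_group M S\<^esub> x = x"
    using a by (simp add: one artin_mult)
  show "\<exists>y\<in>carrier (artin_group M S). y \<otimes>\<^bsub>artin_group M S\<^esub> x = \<one>\<^bsub>artin_group M S\<^esub>"
  proof
    show "artin_rel M S `` {winv a} \<in> carrier (artin_group M S)"
      using a winv_words by (auto simp: artin_carrier)
    show "artin_rel M S `` {winv a} \<otimes>\<^bsub>artin_group M S\<^esub> x = \<one>\<^bsub>artin_group M S\<^esub>"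
      using a winv_words[OF a(1)] by (simp add: one artin_mult class_eq winv_l)
  qed
qed

lemma artin_generated: "artin_parabolic M S S = carrier (artin_group M S)"
proof
  interpret group "artin_group M S" by (rule artin_group)
  show "artin_parabolic M S S \<subseteq> carrier (artin_group M S)"
    unfolding artin_parabolic_def
    by (rule generate_incl) (auto simp: artin_gen_def artin_carrier)
  have "w \<in> words_over S \<Longrightarrow> artin_rel M S `` {w} \<in> artin_parabolic M S S" for w
  proof (induction w)
    case Nil then show ?case
      unfolding artin_parabolic_def using generate.one[of "artin_group M S"]
      by (simp add: artin_group_def)
  next
    case (Cons x w)
    obtain s b where x: "x = (s, b)" by force
    have s: "s \<in> S" using Cons x by auto
    have g: "artin_gen M S s \<in> generate (artin_group M S) (artin_gen M S ` S)"
      using s by (auto intro: generate.incl)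
    have sx: "artin_rel M S `` {[x]} \<in> artin_parabolic M S S"
    proof (cases b)
      case True then show ?thesis using g x by (simp add: artin_parabolic_def artin_gen_def)
    next
      case False
      have "inv\<^bsub>artin_group M S\<^esub> (artin_gen M S s) = artin_rel M S `` {[(s, False)]}"
      proof (rule inv_equality)
        show "artin_rel M S `` {[(s, False)]} \<otimes>\<^bsub>artin_group M S\<^esub> artin_gen M S s = \<one>\<^bsub>artin_group M S\<^esub>"
        proof -
          have e: "artin_eq M S [(s, False), (s, True)] []"
            using s artin_eq.cancel[of "[]" S "[]" s M False] by simp
          have "artin_rel M S `` {[(s, False), (s, True)]} = artin_rel M S `` {[]}"
            using class_eq[of "[(s, False), (s, True)]" S "[]" M] e s by simp
          then show ?thesis using s by (simp add: artin_gen_def artin_mult) (simp add: artin_group_def)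
        qed
        show "artin_gen M S s \<in> carrier (artin_group M S)"
          using s by (auto simp: artin_gen_def artin_carrier)
        show "artin_rel M S `` {[(s, False)]} \<in> carrier (artin_group M S)"
          using s by (auto simp: artin_carrier)
      qed
      then show ?thesis using s False x generate.inv[of "artin_gen M S s" "artin_gen M S ` S" "artin_group M S"]
        by (simp add: artin_parabolic_def)
    qed
    have "artin_rel M S `` {x # w} = artin_rel M S `` {[x]} \<otimes>\<^bsub>artin_group M S\<^esub> artin_rel M S `` {w}"
      using Cons x by (simp add: artin_mult)
    then show ?case using sx Cons unfolding artin_parabolic_def
      by (simp add: generate.eng)
  qed
  then show "carrier (artin_group M S) \<subseteq> artin_parabolic M S S"
    by (auto simp: artin_carrier)
qed

lemma hom_restrict_iff: "hom (G\<lparr>carrier := A\<rparr>) (G\<lparr>carrier := B\<rparr>) =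
   {h. h \<in> A \<rightarrow> B \<and> (\<forall>x\<in>A. \<forall>y\<in>A. h (x \<otimes>\<^bsub>G\<^esub> y) = h x \<otimes>\<^bsub>G\<^esub> h y)}"
  by (simp add: hom_def)

theorem lemma3p1:
  fixes M :: "'a \<Rightarrow> 'a \<Rightarrow> enat" and S :: "'a set"
  assumes "finite S" and "coxeter_matrix M S"
  shows "parabolic_retractable M S \<longleftrightarrow>
    (\<forall>X\<subseteq>S. \<forall>x\<in>X. \<exists>\<phi>.
       retraction ((artin_group M S)\<lparr>carrier := artin_parabolic M S X\<rparr>)
                  (artin_parabolic M S (X - {x})) \<phi>)"
proof
  let ?G = "artin_group M S"
  let ?A = "artin_parabolic M S"
  have GG: "?G\<lparr>carrier := ?A S\<rparr> = ?G" by (simp add: artin_generated)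
  interpret group ?G by (rule artin_group)
  {
    assume pr: "parabolic_retractable M S"
    show "\<forall>X\<subseteq>S. \<forall>x\<in>X. \<exists>\<phi>. retraction (?G\<lparr>carrier := ?A X\<rparr>) (?A (X - {x})) \<phi>"
    proof (intro allI impI ballI)
      fix X x assume X: "X \<subseteq> S" and x: "x \<in> X"
      obtain \<phi> where r: "retraction ?G (?A (X - {x})) \<phi>"
        using pr X unfolding parabolic_retractable_def by (meson Diff_subset order_trans)
      have sub0: "?A X \<subseteq> ?A S" unfolding artin_parabolic_def
        by (rule mono_generate) (use X in blast)
      have sub: "?A X \<subseteq> carrier ?G" using sub0 artin_generated[of M S] by simp
      show "\<exists>\<phi>. retraction (?G\<lparr>carrier := ?A X\<rparr>) (?A (X - {x})) \<phi>"
      proof -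
        have h1: "\<phi> \<in> carrier ?G \<rightarrow> ?A (X - {x})"
          and h2: "\<forall>a\<in>carrier ?G. \<forall>b\<in>carrier ?G. \<phi> (a \<otimes>\<^bsub>?G\<^esub> b) = \<phi> a \<otimes>\<^bsub>?G\<^esub> \<phi> b"
          and h3: "\<forall>h\<in>?A (X - {x}). \<phi> h = h"
          using r unfolding retraction_def hom_def by simp_all
        have "\<phi> \<in> ?A X \<rightarrow> ?A (X - {x})" using h1 sub by blast
        moreover have "\<forall>a\<in>?A X. \<forall>b\<in>?A X. \<phi> (a \<otimes>\<^bsub>?G\<^esub> b) = \<phi> a \<otimes>\<^bsub>?G\<^esub> \<phi> b"
          using h2 sub by blast
        ultimately have "retraction (?G\<lparr>carrier := ?A X\<rparr>) (?A (X - {x})) \<phi>"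
          using h3 unfolding retraction_def hom_def by simp
        then show ?thesis by blast
      qed
    qed
  }
  {
    assume H: "\<forall>X\<subseteq>S. \<forall>x\<in>X. \<exists>\<phi>. retraction (?G\<lparr>carrier := ?A X\<rparr>) (?A (X - {x})) \<phi>"
    show "parabolic_retractable M S"
      unfolding parabolic_retractable_def
    proof (intro allI impI)
      fix X assume X: "X \<subseteq> S"
      have main: "\<forall>Y. X \<subseteq> Y \<and> Y \<subseteq> S \<and> card (Y - X) = n \<longrightarrow>
          (\<exists>\<phi>. retraction (?G\<lparr>carrier := ?A Y\<rparr>) (?A X) \<phi>)" for n
      proof (induction n)
        case 0
        show ?case
        proof (intro allI impI)
          fix Y assume Y: "X \<subseteq> Y \<and> Y \<subseteq> S \<and> card (Y - X) = 0"
          have fin: "finite (Y - X)" using Y finite_subset[OF _ assms(1)] by blast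
          have "Y - X = {}" using fin Y card_0_eq by blast
          then have "Y = X" using Y by blast
          then show "\<exists>\<phi>. retraction (?G\<lparr>carrier := ?A Y\<rparr>) (?A X) \<phi>"
            by (intro exI[of _ id]) (simp add: retraction_def hom_def)
        qed
      next
        case (Suc n)
        show ?case
        proof (intro allI impI)
          fix Y assume Y: "X \<subseteq> Y \<and> Y \<subseteq> S \<and> card (Y - X) = Suc n"
          have ne: "Y - X \<noteq> {}" using Y by (intro notI) simp
          then obtain y where y: "y \<in> Y - X" by blast
          have fin: "finite (Y - X)" using Y finite_subset[OF _ assms(1)] by blast
          have e: "(Y - {y}) - X = (Y - X) - {y}" by blast
          have c: "card ((Y - {y}) - X) = n" unfolding e using Y y fin by (simp add: card_Diff_singleton)
          obtain \<psi> where psi: "retraction (?G\<lparr>carrier := ?A (Y - {y})\<rparr>) (?A X) \<psi>"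
          proof -
            have "X \<subseteq> Y - {y} \<and> Y - {y} \<subseteq> S \<and> card ((Y - {y}) - X) = n" using Y y c by blast
            then have "\<exists>\<phi>. retraction (?G\<lparr>carrier := ?A (Y - {y})\<rparr>) (?A X) \<phi>"
              using Suc.IH by (rule_tac mp[OF spec[OF Suc.IH]])
            then show ?thesis using that by blast
          qed
          obtain \<rho> where rho: "retraction (?G\<lparr>carrier := ?A Y\<rparr>) (?A (Y - {y})) \<rho>"
            using H[rule_format, of Y y] Y y by blast
          have sub: "?A X \<subseteq> ?A (Y - {y})" unfolding artin_parabolic_def
            by (rule mono_generate) (use Y y in blast)
          have "retraction (?G\<lparr>carrier := ?A Y\<rparr>) (?A X) (\<psi> \<circ> \<rho>)"
          proof -
            have p1: "\<psi> \<in> ?A (Y - {y}) \<rightarrow> ?A X"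
              and p2: "\<forall>a\<in>?A (Y - {y}). \<forall>b\<in>?A (Y - {y}). \<psi> (a \<otimes>\<^bsub>?G\<^esub> b) = \<psi> a \<otimes>\<^bsub>?G\<^esub> \<psi> b"
              and p3: "\<forall>h\<in>?A X. \<psi> h = h"
              using psi unfolding retraction_def hom_def by simp_all
            have r1: "\<rho> \<in> ?A Y \<rightarrow> ?A (Y - {y})"
              and r2: "\<forall>a\<in>?A Y. \<forall>b\<in>?A Y. \<rho> (a \<otimes>\<^bsub>?G\<^esub> b) = \<rho> a \<otimes>\<^bsub>?G\<^esub> \<rho> b"
              and r3: "\<forall>h\<in>?A (Y - {y}). \<rho> h = h"
              using rho unfolding retraction_def hom_def by simp_all
            have "\<psi> \<circ> \<rho> \<in> ?A Y \<rightarrow> ?A X" 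
            proof (rule Pi_I)
              fix a assume a: "a \<in> ?A Y"
              have "\<rho> a \<in> ?A (Y - {y})" using r1 a by (rule funcset_mem)
              then have "\<psi> (\<rho> a) \<in> ?A X" using p1 by (rule funcset_mem[rotated])
              then show "(\<psi> \<circ> \<rho>) a \<in> ?A X" by simp
            qed
            moreover have "\<forall>a\<in>?A Y. \<forall>b\<in>?A Y. (\<psi> \<circ> \<rho>) (a \<otimes>\<^bsub>?G\<^esub> b) = (\<psi> \<circ> \<rho>) a \<otimes>\<^bsub>?G\<^esub> (\<psi> \<circ> \<rho>) b"
            proof (intro ballI)
              fix a b assume a: "a \<in> ?A Y" and b: "b \<in> ?A Y"
              have "\<rho> a \<in> ?A (Y - {y})" "\<rho> b \<in> ?A (Y - {y})" using r1 a b by blast+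
              then show "(\<psi> \<circ> \<rho>) (a \<otimes>\<^bsub>?G\<^esub> b) = (\<psi> \<circ> \<rho>) a \<otimes>\<^bsub>?G\<^esub> (\<psi> \<circ> \<rho>) b"
                using r2 p2 a b by simp
            qed
            moreover have "\<forall>h\<in>?A X. (\<psi> \<circ> \<rho>) h = h" using p3 r3 sub by auto
            ultimately show ?thesis unfolding retraction_def hom_def by simp
          qed
          then show "\<exists>\<phi>. retraction (?G\<lparr>carrier := ?A Y\<rparr>) (?A X) \<phi>" by blast
        qed
      qed
      have fin: "finite (S - X)" using assms(1) by simp
      from main[of "card (S - X)"] X obtain \<phi> where "retraction (?G\<lparr>carrier := ?A S\<rparr>) (?A X) \<phi>"
        by blast
      then have "retraction ?G (?A X) \<phi>" unfolding GG .
      then show "\<exists>\<phi>. retraction ?G (?A X) \<phi>" by blast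
    qed
  }
qed

end
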